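(* Let $(K,\succ)$ be an ordered field and $\Gamma=(V,\rho,a_0,B)$ an infinite network over $K$. For $n\in\mathbb N$ let $V_n=\{x\in V:\operatorname{dist}(a_0,x)\le n\}$, $\partial V_n=\{x\in V:\operatorname{dist}(a_0,x)=n\}$, $B_n=B\cap V_n$, and let $\Gamma_n=(V_n,\rho|_{V_n},a_0,B_n\cup\partial V_n)$ be the finite network on the induced subgraph on $V_n$ with the restricted admittances. Then for every $n\in\mathbb N$, $$\mathcal P_{eff}(\Gamma_{n+1})\preceq \mathcal P_{eff}(\Gamma_n).$$
   Context: A network over an ordered field $(K,\succ)$ is $\Gamma=(V,\rho,a_0,B)$: $(V,E)$ a locally finite connected graph with $|V|\ge2$, $\rho:E\to K$ positive (admittance), $a_0\in V$, $B\subseteq V\setminus\{a_0\}$ nonempty; infinite if $|V|=\infty$. Set $\rho_{xy}=0$ if $xy$ is not an edge; $x\sim y$ means $xy$ is an edge; $\operatorname{dist}$ is the graph distance. For a finite network, the Dirichlet problem is: $v:V\to K$ with $\sum_y(v(y)-v(x))\rho_{xy}=0$ for $x\notin B\cup\{a_0\}$, $v=0$ on $B$, $v(a_0)=1$; it has a unique solution. The effective admittance of a finite network is $\mathcal P_{eff}(\Gamma)=\sum_{x\sim a_0}(1-v(x))\rho_{xa_0}$ with $v$ this solution. $\preceq$ denotes the order of $K$. *)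

theory Defs
  imports Main
begin

inductive walkn :: "('v \<Rightarrow> 'v \<Rightarrow> bool) \<Rightarrow> 'v \<Rightarrow> nat \<Rightarrow> 'v \<Rightarrow> bool"
  for E where
  walk0: "walkn E x 0 x"
| walkS: "walkn E x n y \<Longrightarrow> E y z \<Longrightarrow> walkn E x (Suc n) z"

definition gdist :: "('v \<Rightarrow> 'v \<Rightarrow> bool) \<Rightarrow> 'v \<Rightarrow> 'v \<Rightarrow> nat" where
  "gdist E x y = (LEAST n. walkn E x n y)"

definition network ::
  "'v set \<Rightarrow> ('v \<Rightarrow> 'v \<Rightarrow> bool) \<Rightarrow> ('v \<Rightarrow> 'v \<Rightarrow> 'a::linordered_field) \<Rightarrow> 'v \<Rightarrow> 'v set \<Rightarrow> bool" where
  "network V E rho a0 B \<longleftrightarrow>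
     (\<forall>x y. E x y \<longrightarrow> x \<in> V \<and> y \<in> V) \<and>
     (\<forall>x y. E x y \<longrightarrow> E y x) \<and>
     (\<forall>x. \<not> E x x) \<and>
     (\<forall>x\<in>V. finite {y. E x y}) \<and>
     (\<forall>x\<in>V. \<forall>y\<in>V. \<exists>n. walkn E x n y) \<and>
     (\<exists>x\<in>V. \<exists>y\<in>V. x \<noteq> y) \<and>
     (\<forall>x y. E x y \<longrightarrow> rho x y > 0) \<and>
     (\<forall>x y. \<not> E x y \<longrightarrow> rho x y = 0) \<and>
     (\<forall>x y. rho x y = rho y x) \<and>
     a0 \<in> V \<and> B \<subseteq> V - {a0} \<and> B \<noteq> {}"

(* v solves the Dirichlet problem of the finite network (V, rho, a0, B);
   v is normalised to 0 outside V so that the solution is unique as a HOL function *)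
definition dirichlet_sol ::
  "'v set \<Rightarrow> ('v \<Rightarrow> 'v \<Rightarrow> bool) \<Rightarrow> ('v \<Rightarrow> 'v \<Rightarrow> 'a::linordered_field) \<Rightarrow> 'v \<Rightarrow> 'v set \<Rightarrow> ('v \<Rightarrow> 'a) \<Rightarrow> bool" where
  "dirichlet_sol V E rho a0 B v \<longleftrightarrow>
     (\<forall>x\<in>V - (B \<union> {a0}). (\<Sum>y\<in>{y\<in>V. E x y}. (v y - v x) * rho x y) = 0) \<and>
     (\<forall>x\<in>B. v x = 0) \<and> v a0 = 1 \<and> (\<forall>x. x \<notin> V \<longrightarrow> v x = 0)"

definition P_eff ::
  "'v set \<Rightarrow> ('v \<Rightarrow> 'v \<Rightarrow> bool) \<Rightarrow> ('v \<Rightarrow> 'v \<Rightarrow> 'a::linordered_field) \<Rightarrow> 'v \<Rightarrow> 'v set \<Rightarrow> 'a" where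
  "P_eff V E rho a0 B =
     (let v = (THE v. dirichlet_sol V E rho a0 B v)
      in (\<Sum>x\<in>{x\<in>V. E x a0}. (1 - v x) * rho x a0))"

definition ballV :: "'v set \<Rightarrow> ('v \<Rightarrow> 'v \<Rightarrow> bool) \<Rightarrow> 'v \<Rightarrow> nat \<Rightarrow> 'v set" where
  "ballV V E a0 n = {x\<in>V. gdist E a0 x \<le> n}"

definition sphereV :: "'v set \<Rightarrow> ('v \<Rightarrow> 'v \<Rightarrow> bool) \<Rightarrow> 'v \<Rightarrow> nat \<Rightarrow> 'v set" where
  "sphereV V E a0 n = {x\<in>V. gdist E a0 x = n}"

definition restrE :: "'v set \<Rightarrow> ('v \<Rightarrow> 'v \<Rightarrow> bool) \<Rightarrow> 'v \<Rightarrow> 'v \<Rightarrow> bool" where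
  "restrE W E x y \<longleftrightarrow> E x y \<and> x \<in> W \<and> y \<in> W"

definition restrRho :: "'v set \<Rightarrow> ('v \<Rightarrow> 'v \<Rightarrow> 'a::zero) \<Rightarrow> 'v \<Rightarrow> 'v \<Rightarrow> 'a" where
  "restrRho W rho x y = (if x \<in> W \<and> y \<in> W then rho x y else 0)"

definition P_eff_trunc ::
  "'v set \<Rightarrow> ('v \<Rightarrow> 'v \<Rightarrow> bool) \<Rightarrow> ('v \<Rightarrow> 'v \<Rightarrow> 'a::linordered_field) \<Rightarrow> 'v \<Rightarrow> 'v set \<Rightarrow> nat \<Rightarrow> 'a" where
  "P_eff_trunc V E rho a0 B n =
     P_eff (ballV V E a0 n) (restrE (ballV V E a0 n) E) (restrRho (ballV V E a0 n) rho) a0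
           ((B \<inter> ballV V E a0 n) \<union> sphereV V E a0 n)"

end

theory Submission
  imports Defs
begin

definition Lap :: "'v set \<Rightarrow> ('v \<Rightarrow> 'v \<Rightarrow> 'a::linordered_field) \<Rightarrow> ('v \<Rightarrow> 'a) \<Rightarrow> 'v \<Rightarrow> 'a" where
  "Lap W c f x = (\<Sum>y\<in>W. c x y * (f y - f x))"

definition Dform :: "'v set \<Rightarrow> ('v \<Rightarrow> 'v \<Rightarrow> 'a::linordered_field) \<Rightarrow> ('v \<Rightarrow> 'a) \<Rightarrow> ('v \<Rightarrow> 'a) \<Rightarrow> 'a" where
  "Dform W c f g = (\<Sum>x\<in>W. \<Sum>y\<in>W. c x y * (f y - f x) * (g y - g x))"

lemma green:
  assumes "\<forall>x y. c x y = c y x"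
  shows "Dform W c f g = - 2 * (\<Sum>x\<in>W. g x * Lap W c f x)"
proof -
  have "Dform W c f g = (\<Sum>x\<in>W. \<Sum>y\<in>W. c x y * (f y - f x) * g y) - (\<Sum>x\<in>W. \<Sum>y\<in>W. c x y * (f y - f x) * g x)"
  proof -
    have "\<And>x y. c x y * (f y - f x) * (g y - g x) = c x y * (f y - f x) * g y - c x y * (f y - f x) * g x"
      by (simp add: algebra_simps)
    then show ?thesis unfolding Dform_def by (simp add: sum_subtractf)
  qed
  also have "(\<Sum>x\<in>W. \<Sum>y\<in>W. c x y * (f y - f x) * g y) = (\<Sum>y\<in>W. \<Sum>x\<in>W. c x y * (f y - f x) * g y)"
    by (rule sum.swap)
  also have "\<dots> = - (\<Sum>x\<in>W. \<Sum>y\<in>W. c x y * (f y - f x) * g x)"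
    using assms by (simp add: sum_negf[symmetric] algebra_simps)
  finally have "Dform W c f g = -2 * (\<Sum>x\<in>W. \<Sum>y\<in>W. c x y * (f y - f x) * g x)" by simp
  also have "\<dots> = -2 * (\<Sum>x\<in>W. g x * Lap W c f x)"
    by (simp add: Lap_def sum_distrib_left mult.commute mult.left_commute)
  finally show ?thesis .
qed

lemma Dform_sym: "Dform W c f g = Dform W c g f"
  unfolding Dform_def by (simp add: algebra_simps)

lemma Dform_expand:
  "Dform W c (\<lambda>x. f x - g x) (\<lambda>x. f x - g x) = Dform W c f f - 2 * Dform W c f g + Dform W c g g"
proof -
  have e: "\<And>x y. c x y * ((f y - g y) - (f x - g x)) * ((f y - g y) - (f x - g x)) =
     c x y * (f y - f x) * (f y - f x) - 2 * (c x y * (f y - f x) * (g y - g x)) + c x y * (g y - g x) * (g y - g x)"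
    by (simp add: algebra_simps)
  show ?thesis unfolding Dform_def e by (simp add: sum.distrib sum_subtractf sum_distrib_left)
qed

lemma Dform_nonneg:
  assumes "\<forall>x y. 0 \<le> c x y"
  shows "0 \<le> Dform W c f f"
  unfolding Dform_def using assms by (intro sum_nonneg) (simp add: mult.assoc mult_nonneg_nonneg)

lemma green_sol:
  assumes "finite W" "a0 \<in> W" "\<forall>x y. c x y = c y x"
    "\<forall>x\<in>W-(Bd\<union>{a0}). Lap W c v x = 0" "\<forall>x\<in>Bd. g x = 0"
  shows "Dform W c v g = -2 * (g a0 * Lap W c v a0)"
proof -
  have "(\<Sum>x\<in>W. g x * Lap W c v x) = g a0 * Lap W c v a0 + (\<Sum>x\<in>W-{a0}. g x * Lap W c v x)"
    using assms(1,2) by (simp add: sum.remove)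
  also have "(\<Sum>x\<in>W-{a0}. g x * Lap W c v x) = 0"
    using assms(4,5) by (intro sum.neutral) auto
  finally show ?thesis using green[OF assms(3)] by simp
qed

lemma exist_sol:
  fixes c :: "'v \<Rightarrow> 'v \<Rightarrow> 'a::linordered_field"
  assumes "finite I" "I \<subseteq> W" "finite W" "\<forall>x y. 0 \<le> c x y" "\<forall>x y. c x y = c y x"
  shows "\<exists>u. (\<forall>x\<in>I. Lap W c u x = 0) \<and> (\<forall>x\<in>W-I. u x = f x)"
  using assms
proof (induction I arbitrary: W c rule: finite_induct)
  case empty
  then show ?case by auto
next
  case (insert z I)
  define W' where "W' = W - {z}"
  define s where "s = (\<Sum>y\<in>W'. c z y)"
  define c' where "c' = (\<lambda>x y. c x y + c x z * c z y / s)"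
  have fW': "finite W'" using insert.prems by (simp add: W'_def)
  have s0: "0 \<le> s" unfolding s_def using insert.prems by (simp add: sum_nonneg)
  have "\<exists>u. (\<forall>x\<in>I. Lap W' c' u x = 0) \<and> (\<forall>x\<in>W'-I. u x = f x)"
  proof (rule insert.IH)
    show "I \<subseteq> W'" using insert by (auto simp: W'_def)
    show "finite W'" by (rule fW')
    show "\<forall>x y. 0 \<le> c' x y" using insert.prems s0 by (simp add: c'_def)
    show "\<forall>x y. c' x y = c' y x" using insert.prems by (simp add: c'_def mult.commute)
  qed
  then obtain u where u1: "\<forall>x\<in>I. Lap W' c' u x = 0" and u2: "\<forall>x\<in>W'-I. u x = f x" by blast
  define u' where "u' = u(z := (\<Sum>y\<in>W'. c z y * u y) / s)"
  have zW: "z \<in> W" using insert.prems by auto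
  have Wsp: "W = insert z W'" "z \<notin> W'" using zW by (auto simp: W'_def)
  have zero_if: "c z y = 0" if "s = 0" "y \<in> W'" for y
  proof -
    have "\<forall>y\<in>W'. c z y = 0" using sum_nonneg_eq_0_iff[OF fW', of "c z"] that(1) insert.prems(3) unfolding s_def
      by blast
    then show ?thesis using that(2) by auto
  qed
  have Lsplit: "Lap W c g x = (\<Sum>y\<in>W'. c x y * (g y - g x)) + c x z * (g z - g x)" for g x
    unfolding Lap_def using Wsp fW' by (simp add: add.commute)
  show ?case
  proof (intro exI[of _ u'] conjI ballI)
    fix x assume "x \<in> W - insert z I"
    then show "u' x = f x" using u2 by (auto simp: u'_def W'_def)
  next
    fix x assume x: "x \<in> insert z I"
    show "Lap W c u' x = 0"
    proof (cases "x = z")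
      case True
      have "Lap W c u' z = (\<Sum>y\<in>W'. c z y * (u y - u' z))"
        unfolding Lsplit using Wsp by (auto simp: u'_def intro!: sum.cong)
      also have "\<dots> = (\<Sum>y\<in>W'. c z y * u y) - s * u' z"
        unfolding s_def by (simp add: algebra_simps sum_subtractf sum_distrib_right sum_distrib_left)
      also have "\<dots> = 0"
      proof (cases "s = 0")
        case True
        then show ?thesis using zero_if by simp
      next
        case False
        then show ?thesis by (simp add: u'_def)
      qed
      finally show ?thesis using True by simp
    next
      case False
      with x have xI: "x \<in> I" and xW': "x \<in> W'" using insert.prems by (auto simp: W'_def)
      have eq: "c x z * (u' z - u x) = (\<Sum>y\<in>W'. c x z * c z y / s * (u y - u x))"
      proof (cases "s = 0")
        case True
        then have "c x z = 0" using zero_if[OF True xW'] insert.prems(4) by metis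
        then show ?thesis using True by simp
      next
        case False
        have "(\<Sum>y\<in>W'. c z y * (u y - u x)) = (\<Sum>y\<in>W'. c z y * u y) - s * u x"
          unfolding s_def by (simp add: algebra_simps sum_subtractf sum_distrib_right sum_distrib_left)
        then have "u' z - u x = (\<Sum>y\<in>W'. c z y * (u y - u x)) / s"
          using False by (simp add: u'_def field_simps)
        then show ?thesis
          by (simp add: sum_distrib_left sum_divide_distrib mult.assoc)
      qed
      have "Lap W c u' x = (\<Sum>y\<in>W'. c x y * (u y - u x)) + c x z * (u' z - u x)"
        unfolding Lsplit using Wsp False by (auto simp: u'_def intro!: sum.cong)
      also have "\<dots> = (\<Sum>y\<in>W'. c' x y * (u y - u x))"
        unfolding eq c'_def sum.distrib[symmetric] by (intro sum.cong) (simp_all add: algebra_simps)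
      also have "\<dots> = Lap W' c' u x" by (simp add: Lap_def)
      also have "\<dots> = 0" using u1 xI by simp
      finally show ?thesis .
    qed
  qed
qed

lemma walk_const:
  assumes "walkn E a k b" "\<forall>x y. E x y \<longrightarrow> d x = d y"
  shows "d b = d a"
  using assms by (induction rule: walkn.induct) auto

lemma uniq_zero:
  fixes c :: "'v \<Rightarrow> 'v \<Rightarrow> 'a::linordered_field"
  assumes fin: "finite W" and a0W: "a0 \<in> W" and sym: "\<forall>x y. c x y = c y x" and nn: "\<forall>x y. 0 \<le> c x y"
    and conn: "\<forall>x\<in>W. \<exists>k. walkn E' a0 k x"
    and edg: "\<forall>x y. E' x y \<longrightarrow> x \<in> W \<and> y \<in> W \<and> 0 < c x y"
    and h: "\<forall>x\<in>W-(Bd\<union>{a0}). Lap W c d x = 0" and hb: "\<forall>x\<in>Bd. d x = 0" and ha: "d a0 = 0"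
  shows "\<forall>x\<in>W. d x = 0"
proof -
  have "Dform W c d d = -2 * (d a0 * Lap W c d a0)"
    by (rule green_sol[OF fin a0W sym h hb])
  then have D0: "Dform W c d d = 0" using ha by simp
  have tn: "\<forall>x\<in>W. \<forall>y\<in>W. c x y * (d y - d x) * (d y - d x) = 0"
  proof (intro ballI)
    fix x y assume xW: "x \<in> W" and yW: "y \<in> W"
    have tnn: "0 \<le> c x y * (d y - d x) * (d y - d x)" for x y
      using nn by (simp add: mult.assoc mult_nonneg_nonneg)
    have inn: "0 \<le> (\<Sum>y\<in>W. c x y * (d y - d x) * (d y - d x))" for x
      by (intro sum_nonneg tnn)
    have "(\<Sum>x\<in>W. \<Sum>y\<in>W. c x y * (d y - d x) * (d y - d x)) = 0"
      using D0 unfolding Dform_def .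
    then have "(\<Sum>y\<in>W. c x y * (d y - d x) * (d y - d x)) = 0"
      using sum_nonneg_eq_0_iff[OF fin inn] xW by simp
    then show "c x y * (d y - d x) * (d y - d x) = 0"
      using sum_nonneg_eq_0_iff[OF fin tnn] yW by simp
  qed
  have "\<forall>x y. E' x y \<longrightarrow> d x = d y"
  proof (intro allI impI)
    fix x y assume "E' x y"
    then have "x \<in> W" "y \<in> W" "0 < c x y" using edg by auto
    then show "d x = d y" using tn by force
  qed
  then show ?thesis
  proof (intro ballI)
    fix x assume "x \<in> W"
    then obtain k where "walkn E' a0 k x" using conn by blast
    then show "d x = 0" using walk_const[of E' a0 k x d] ha \<open>\<forall>x y. E' x y \<longrightarrow> d x = d y\<close> by simp
  qed
qed

lemma sum_edges:
  assumes "finite W" "\<forall>y\<in>W. \<not> E' x y \<longrightarrow> c x y = 0"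
  shows "(\<Sum>y\<in>{y\<in>W. E' x y}. (v y - v x) * c x y) = Lap W c v x"
proof -
  have "(\<Sum>y\<in>{y\<in>W. E' x y}. (v y - v x) * c x y) = (\<Sum>y\<in>W. (v y - v x) * c x y)"
    using assms by (intro sum.mono_neutral_left) auto
  then show ?thesis by (simp add: Lap_def mult.commute)
qed

lemma peff_char:
  fixes c :: "'v \<Rightarrow> 'v \<Rightarrow> 'a::linordered_field"
  assumes fin: "finite W" and a0W: "a0 \<in> W" and a0B: "a0 \<notin> Bd" and sym: "\<forall>x y. c x y = c y x" and nn: "\<forall>x y. 0 \<le> c x y"
    and conn: "\<forall>x\<in>W. \<exists>k. walkn E' a0 k x"
    and edg: "\<forall>x y. E' x y \<longrightarrow> x \<in> W \<and> y \<in> W \<and> 0 < c x y"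
    and off: "\<forall>x\<in>W. \<forall>y\<in>W. \<not> E' x y \<longrightarrow> c x y = 0"
  shows "\<exists>v. (\<forall>x\<in>W-(Bd\<union>{a0}). Lap W c v x = 0) \<and> (\<forall>x\<in>Bd. v x = 0) \<and> v a0 = 1
     \<and> (\<forall>x. x \<notin> W \<longrightarrow> v x = 0) \<and> P_eff W E' c a0 Bd = - Lap W c v a0"
proof -
  have solI: "dirichlet_sol W E' c a0 Bd v \<longleftrightarrow> (\<forall>x\<in>W-(Bd\<union>{a0}). Lap W c v x = 0) \<and> (\<forall>x\<in>Bd. v x = 0) \<and> v a0 = 1
     \<and> (\<forall>x. x \<notin> W \<longrightarrow> v x = 0)" for v
  proof -
    have se: "(\<Sum>y\<in>{y\<in>W. E' x y}. (v y - v x) * c x y) = Lap W c v x" if "x \<in> W" for x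
      by (rule sum_edges[OF fin]) (use off that in auto)
    have "(\<forall>x\<in>W-(Bd\<union>{a0}). (\<Sum>y\<in>{y\<in>W. E' x y}. (v y - v x) * c x y) = 0) \<longleftrightarrow>
          (\<forall>x\<in>W-(Bd\<union>{a0}). Lap W c v x = 0)"
      using se by (intro ball_cong) auto
    then show ?thesis unfolding dirichlet_sol_def by simp
  qed
  obtain u where u1: "\<forall>x\<in>W-(Bd\<union>{a0}). Lap W c u x = 0"
    and u2: "\<forall>x\<in>W-(W-(Bd\<union>{a0})). u x = (if x = a0 then 1 else 0)"
    using exist_sol[OF _ _ fin nn sym, of "W-(Bd\<union>{a0})" "\<lambda>x. if x = a0 then 1 else 0"] fin by auto
  define v where "v = (\<lambda>x. if x \<in> W then u x else 0)"
  have Lv: "Lap W c v x = Lap W c u x" if "x \<in> W" for x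
    unfolding Lap_def v_def using that by (intro sum.cong) auto
  have vs: "dirichlet_sol W E' c a0 Bd v"
    unfolding solI
  proof (intro conjI)
    show "\<forall>x\<in>W - (Bd \<union> {a0}). Lap W c v x = 0" using u1 Lv by simp
    show "\<forall>x\<in>Bd. v x = 0"
    proof
      fix x assume "x \<in> Bd"
      then show "v x = 0" using u2 a0B unfolding v_def by (cases "x \<in> W") auto
    qed
    show "v a0 = 1" using u2 a0W unfolding v_def by simp
    show "\<forall>x. x \<notin> W \<longrightarrow> v x = 0" unfolding v_def by simp
  qed
  have un: "v' = v" if "dirichlet_sol W E' c a0 Bd v'" for v'
  proof -
    define d where "d = (\<lambda>x. v' x - v x)"
    have Ld: "Lap W c d x = Lap W c v' x - Lap W c v x" for x
      unfolding Lap_def d_def by (simp add: sum_subtractf[symmetric] algebra_simps)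
    have s1: "(\<forall>x\<in>W-(Bd\<union>{a0}). Lap W c v' x = 0) \<and> (\<forall>x\<in>Bd. v' x = 0) \<and> v' a0 = 1
     \<and> (\<forall>x. x \<notin> W \<longrightarrow> v' x = 0)" using that unfolding solI .
    have s2: "(\<forall>x\<in>W-(Bd\<union>{a0}). Lap W c v x = 0) \<and> (\<forall>x\<in>Bd. v x = 0) \<and> v a0 = 1
     \<and> (\<forall>x. x \<notin> W \<longrightarrow> v x = 0)" using vs unfolding solI .
    have "\<forall>x\<in>W. d x = 0"
    proof (rule uniq_zero[OF fin a0W sym nn conn edg, of Bd])
      show "\<forall>x\<in>W - (Bd \<union> {a0}). Lap W c d x = 0" using s1 s2 unfolding Ld by simp
      show "\<forall>x\<in>Bd. d x = 0" using s1 s2 unfolding d_def by simp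
      show "d a0 = 0" using s1 s2 unfolding d_def by simp
    qed
    moreover have "\<forall>x. x \<notin> W \<longrightarrow> d x = 0" using s1 s2 unfolding d_def by simp
    ultimately have "\<forall>x. d x = 0" by blast
    then show ?thesis unfolding d_def by (simp add: fun_eq_iff)
  qed
  have The: "(THE v. dirichlet_sol W E' c a0 Bd v) = v"
    using vs un by (rule the_equality)
  have "P_eff W E' c a0 Bd = (\<Sum>x\<in>{x\<in>W. E' x a0}. (1 - v x) * c x a0)"
    unfolding P_eff_def The by simp
  also have "\<dots> = (\<Sum>x\<in>W. (1 - v x) * c x a0)"
    using fin off a0W by (intro sum.mono_neutral_left) auto
  also have "\<dots> = - Lap W c v a0"
    unfolding Lap_def using vs sym unfolding solI
    by (simp add: sum_negf[symmetric] algebra_simps)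
  finally show ?thesis using vs unfolding solI by blast
qed

lemma net_conn: "network V E rho a0 B \<Longrightarrow> x \<in> V \<Longrightarrow> y \<in> V \<Longrightarrow> \<exists>n. walkn E x n y"
  unfolding network_def by blast

lemma net_a0: "network V E rho a0 B \<Longrightarrow> a0 \<in> V"
  unfolding network_def by blast

lemma net_edgeV: "network V E rho a0 B \<Longrightarrow> E x y \<Longrightarrow> x \<in> V \<and> y \<in> V"
  unfolding network_def by blast

lemma walk_mono:
  assumes "walkn E1 a m b" "\<forall>x y. E1 x y \<longrightarrow> E2 x y"
  shows "walkn E2 a m b"
  using assms by (induction rule: walkn.induct) (auto intro: walkn.intros)

lemma walk_dist: "walkn E a m x \<Longrightarrow> gdist E a x \<le> m"
  unfolding gdist_def by (rule Least_le)

lemma dist_walk: "walkn E a m x \<Longrightarrow> walkn E a (gdist E a x) x"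
  unfolding gdist_def by (rule LeastI)

lemma gdist_self: "gdist E a a = 0"
  using walk_dist[OF walkn.walk0[of E a]] by simp

lemma walk_in_V0:
  assumes "network V E rho a0 B" "walkn E a m x" "a \<in> V"
  shows "x \<in> V"
  using assms(2,3) by (induction rule: walkn.induct) (use assms(1) in \<open>auto simp: network_def\<close>)

lemma walk_in_V:
  assumes "network V E rho a0 B" "walkn E a0 m x"
  shows "x \<in> V"
  using walk_in_V0[OF assms] assms(1) by (simp add: network_def)

lemma dist_edge:
  assumes N: "network V E rho a0 B" and e: "E x y"
  shows "gdist E a0 y \<le> gdist E a0 x + 1"
proof -
  have "x \<in> V" using net_edgeV[OF N e] by simp
  then obtain m where "walkn E a0 m x" using net_conn[OF N net_a0[OF N], of x] by auto
  then have "walkn E a0 (gdist E a0 x) x" by (rule dist_walk)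
  then have "walkn E a0 (Suc (gdist E a0 x)) y" using e by (rule walkn.walkS)
  then show ?thesis using walk_dist by fastforce
qed

lemma walk0_inv: "walkn E a 0 x \<Longrightarrow> x = a"
  by (erule walkn.cases) auto

lemma walkS_inv: "walkn E a (Suc m) x \<Longrightarrow> \<exists>z. walkn E a m z \<and> E z x"
  by (erule walkn.cases) auto

lemma ball_finite:
  assumes N: "network V E rho a0 B"
  shows "finite (ballV V E a0 k)"
proof (induction k)
  case 0
  have "ballV V E a0 0 \<subseteq> {a0}"
  proof
    fix x assume "x \<in> ballV V E a0 0"
    then have x: "x \<in> V" "gdist E a0 x = 0" by (auto simp: ballV_def)
    obtain m where "walkn E a0 m x" using net_conn[OF N net_a0[OF N] x(1)] by auto
    from dist_walk[OF this] have "walkn E a0 0 x" using x by simp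
    then show "x \<in> {a0}" using walk0_inv[of E a0 x] by simp
  qed
  then show ?case by (rule finite_subset) simp
next
  case (Suc k)
  have sub: "ballV V E a0 (Suc k) \<subseteq> ballV V E a0 k \<union> (\<Union>x\<in>ballV V E a0 k. {y. E x y})"
  proof (rule subsetI)
    fix y assume y: "y \<in> ballV V E a0 (Suc k)"
    show "y \<in> ballV V E a0 k \<union> (\<Union>x\<in>ballV V E a0 k. {y. E x y})"
    proof (cases "gdist E a0 y \<le> k")
      case True then show ?thesis using y by (simp add: ballV_def)
    next
      case False
      then have g: "gdist E a0 y = Suc k" using y by (simp add: ballV_def)
      have "y \<in> V" using y by (simp add: ballV_def)
      then obtain m where "walkn E a0 m y" using net_conn[OF N net_a0[OF N], of y] by auto
      from dist_walk[OF this] have "walkn E a0 (Suc k) y" using g by simp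
      then obtain z where z: "walkn E a0 k z" "E z y" using walkS_inv[of E a0 k y] by auto
      have "z \<in> ballV V E a0 k" using z walk_in_V[OF N z(1)] walk_dist[OF z(1)] by (simp add: ballV_def)
      then show ?thesis using z by blast
    qed
  qed
  have fu: "finite (\<Union>x\<in>ballV V E a0 k. {y. E x y})"
  proof (intro finite_UN_I)
    show "finite (ballV V E a0 k)" by (rule Suc)
    fix x assume "x \<in> ballV V E a0 k"
    then have "x \<in> V" by (simp add: ballV_def)
    then show "finite {y. E x y}" using N by (simp add: network_def)
  qed
  show ?case using finite_subset[OF sub] fu Suc by simp
qed

lemma ball_mono: "k \<le> m \<Longrightarrow> ballV V E a0 k \<subseteq> ballV V E a0 m"
  by (auto simp: ballV_def)

lemma walk_restr0:
  assumes N: "network V E rho a0 B" and w: "walkn E a m y" and a: "a = a0"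
  shows "walkn (restrE (ballV V E a0 m) E) a m y"
  using w a proof (induction rule: walkn.induct)
  case (walk0 a) show ?case by (rule walkn.walk0)
next
  case (walkS a m y z)
  have w1: "walkn E a0 m y" using walkS by simp
  have "walkn (restrE (ballV V E a0 (Suc m)) E) a m y"
  proof (rule walk_mono[OF walkS.IH[OF walkS.prems]], intro allI impI)
    fix u v assume "restrE (ballV V E a0 m) E u v"
    then show "restrE (ballV V E a0 (Suc m)) E u v"
      using ball_mono[of m "Suc m" V E a0] unfolding restrE_def by auto
  qed
  moreover have "restrE (ballV V E a0 (Suc m)) E y z"
  proof -
    have "y \<in> V" "z \<in> V" using walk_in_V[OF N w1] net_edgeV[OF N walkS.hyps(2)] by auto
    moreover have "gdist E a0 y \<le> Suc m" using walk_dist[OF w1] by simp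
    moreover have "gdist E a0 z \<le> Suc m" using walk_dist[OF walkn.walkS[OF w1 walkS.hyps(2)]] .
    ultimately show ?thesis using walkS.hyps(2) by (simp add: restrE_def ballV_def)
  qed
  ultimately show ?case by (rule walkn.walkS)
qed

lemma walk_restr:
  assumes N: "network V E rho a0 B" and w: "walkn E a0 m y"
  shows "walkn (restrE (ballV V E a0 m) E) a0 m y"
  using walk_restr0[OF N w refl] .

lemma trunc_ok:
  fixes rho :: "'v \<Rightarrow> 'v \<Rightarrow> 'a::linordered_field"
  assumes N: "network V E rho a0 B" and k: "k \<ge> 1"
  defines "W \<equiv> ballV V E a0 k"
  shows "finite W" "a0 \<in> W" "a0 \<notin> (B \<inter> W) \<union> sphereV V E a0 k"
    "\<forall>x y. restrRho W rho x y = restrRho W rho y x"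
    "\<forall>x y. 0 \<le> restrRho W rho x y"
    "\<forall>x\<in>W. \<exists>m. walkn (restrE W E) a0 m x"
    "\<forall>x y. restrE W E x y \<longrightarrow> x \<in> W \<and> y \<in> W \<and> 0 < restrRho W rho x y"
    "\<forall>x\<in>W. \<forall>y\<in>W. \<not> restrE W E x y \<longrightarrow> restrRho W rho x y = 0"
proof -
  have nf: "(\<forall>x y. E x y \<longrightarrow> rho x y > 0)" "(\<forall>x y. \<not> E x y \<longrightarrow> rho x y = 0)"
     "(\<forall>x y. rho x y = rho y x)" "a0 \<in> V" "B \<subseteq> V - {a0}"
     "\<forall>x\<in>V. \<forall>y\<in>V. \<exists>n. walkn E x n y"
    using N by (auto simp: network_def)
  show "finite W" unfolding W_def by (rule ball_finite[OF N])
  show "a0 \<in> W" using nf gdist_self[of E a0] by (simp add: W_def ballV_def)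
  show "a0 \<notin> (B \<inter> W) \<union> sphereV V E a0 k" using nf k gdist_self[of E a0] by (auto simp: sphereV_def)
  show "\<forall>x y. restrRho W rho x y = restrRho W rho y x" using nf by (auto simp: restrRho_def)
  show "\<forall>x y. 0 \<le> restrRho W rho x y" using nf by (auto simp: restrRho_def) (metis less_le order_refl)
  show "\<forall>x y. restrE W E x y \<longrightarrow> x \<in> W \<and> y \<in> W \<and> 0 < restrRho W rho x y"
    using nf by (auto simp: restrRho_def restrE_def)
  show "\<forall>x\<in>W. \<forall>y\<in>W. \<not> restrE W E x y \<longrightarrow> restrRho W rho x y = 0"
    using nf by (auto simp: restrRho_def restrE_def)
  show "\<forall>x\<in>W. \<exists>m. walkn (restrE W E) a0 m x"
  proof
    fix x assume x: "x \<in> W"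
    then have xV: "x \<in> V" and gk: "gdist E a0 x \<le> k" by (auto simp: W_def ballV_def)
    obtain m where "walkn E a0 m x" using net_conn[OF N net_a0[OF N] xV] by auto
    then have "walkn E a0 (gdist E a0 x) x" by (rule dist_walk)
    then have "walkn (restrE (ballV V E a0 (gdist E a0 x)) E) a0 (gdist E a0 x) x" by (rule walk_restr[OF N])
    then have "walkn (restrE W E) a0 (gdist E a0 x) x"
    proof (rule walk_mono, intro allI impI)
      fix u v assume "restrE (ballV V E a0 (gdist E a0 x)) E u v"
      then show "restrE W E u v" using ball_mono[OF gk, of V E a0] unfolding restrE_def W_def by blast
    qed
    then show "\<exists>m. walkn (restrE W E) a0 m x" by (rule exI)
  qed
qed

theorem mainTheorem7:
  fixes V :: "'v set" and E :: "'v \<Rightarrow> 'v \<Rightarrow> bool"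
    and rho :: "'v \<Rightarrow> 'v \<Rightarrow> 'a::linordered_field" and a0 :: 'v and B :: "'v set"
    and n :: nat
  assumes "network V E rho a0 B" and "infinite V" and "n \<ge> 1"
  shows "P_eff_trunc V E rho a0 B (n + 1) \<le> P_eff_trunc V E rho a0 B n"
proof -
  note N = assms(1)
  define W0 where "W0 = ballV V E a0 n"
  define W1 where "W1 = ballV V E a0 (n+1)"
  define Bd0 where "Bd0 = (B \<inter> W0) \<union> sphereV V E a0 n"
  define Bd1 where "Bd1 = (B \<inter> W1) \<union> sphereV V E a0 (n+1)"
  define c0 where "c0 = restrRho W0 rho"
  define c1 where "c1 = restrRho W1 rho"
  have n1: "n + 1 \<ge> 1" by simp
  note t0 = trunc_ok[OF N assms(3), folded W0_def, folded c0_def Bd0_def]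
  note t1 = trunc_ok[OF N n1, folded W1_def, folded c1_def Bd1_def]
  from peff_char[OF t0(1) t0(2) t0(3) t0(4) t0(5) t0(6) t0(7) t0(8)]
  obtain w where w: "(\<forall>x\<in>W0-(Bd0\<union>{a0}). Lap W0 c0 w x = 0) \<and> (\<forall>x\<in>Bd0. w x = 0) \<and> w a0 = 1
     \<and> (\<forall>x. x \<notin> W0 \<longrightarrow> w x = 0) \<and> P_eff W0 (restrE W0 E) c0 a0 Bd0 = - Lap W0 c0 w a0" ..
  from peff_char[OF t1(1) t1(2) t1(3) t1(4) t1(5) t1(6) t1(7) t1(8)]
  obtain v where v: "(\<forall>x\<in>W1-(Bd1\<union>{a0}). Lap W1 c1 v x = 0) \<and> (\<forall>x\<in>Bd1. v x = 0) \<and> v a0 = 1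
     \<and> (\<forall>x. x \<notin> W1 \<longrightarrow> v x = 0) \<and> P_eff W1 (restrE W1 E) c1 a0 Bd1 = - Lap W1 c1 v a0" ..
  have P0: "P_eff_trunc V E rho a0 B n = - Lap W0 c0 w a0"
    using w unfolding P_eff_trunc_def W0_def c0_def Bd0_def by simp
  have P1: "P_eff_trunc V E rho a0 B (n+1) = - Lap W1 c1 v a0"
    using v unfolding P_eff_trunc_def W1_def c1_def Bd1_def by simp
  have W01: "W0 \<subseteq> W1" unfolding W0_def W1_def by (rule ball_mono) simp
  have wBd1: "\<forall>x\<in>Bd1. w x = 0"
  proof
    fix x assume x: "x \<in> Bd1"
    show "w x = 0"
    proof (cases "x \<in> W0")
      case True
      then have "x \<notin> sphereV V E a0 (n+1)" by (auto simp: W0_def ballV_def sphereV_def)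
      then have "x \<in> Bd0" using x True by (auto simp: Bd1_def Bd0_def)
      then show ?thesis using w by blast
    next
      case False then show ?thesis using w by blast
    qed
  qed
  have D1vv: "Dform W1 c1 v v = -2 * (v a0 * Lap W1 c1 v a0)"
    using green_sol[OF t1(1) t1(2) t1(4)] v by blast
  have D1vw: "Dform W1 c1 v w = -2 * (w a0 * Lap W1 c1 v a0)"
    using green_sol[OF t1(1) t1(2) t1(4)] v wBd1 by blast
  have D0ww: "Dform W0 c0 w w = -2 * (w a0 * Lap W0 c0 w a0)"
    using green_sol[OF t0(1) t0(2) t0(4)] w by blast
  have bnd: "w x = 0" if "x \<in> W0" "y \<in> W1" "y \<notin> W0" "E y x" for x y
  proof -
    have "gdist E a0 y = n + 1" "y \<in> V" using that(2,3) by (auto simp: W0_def W1_def ballV_def)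
    moreover have "gdist E a0 y \<le> gdist E a0 x + 1" using dist_edge[OF N] that(4) N
      unfolding network_def by blast
    moreover have "gdist E a0 x \<le> n" "x \<in> V" using that(1) by (auto simp: W0_def ballV_def)
    ultimately have "x \<in> sphereV V E a0 n" by (simp add: sphereV_def)
    then show ?thesis using w by (auto simp: Bd0_def)
  qed
  have Esym: "E x y \<Longrightarrow> E y x" for x y using N unfolding network_def by blast
  have rho0: "\<not> E x y \<Longrightarrow> rho x y = 0" for x y using N unfolding network_def by blast
  have tm: "c1 x y * (w y - w x) * (w y - w x) =
      (if x \<in> W0 \<and> y \<in> W0 then c0 x y * (w y - w x) * (w y - w x) else 0)"
    if "x \<in> W1" "y \<in> W1" for x y
  proof (cases "x \<in> W0 \<and> y \<in> W0")
    case True then show ?thesis using that W01 by (auto simp: c0_def c1_def restrRho_def)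
  next
    case False
    have "w x = 0 \<and> w y = 0 \<or> rho x y = 0"
    proof (cases "E x y")
      case True
      show ?thesis
      proof (cases "x \<in> W0")
        case xin: True
        then have "y \<notin> W0" using False by simp
        then show ?thesis using bnd[OF xin that(2) _ Esym[OF True]] w by blast
      next
        case xout: False
        show ?thesis
        proof (cases "y \<in> W0")
          case True
          then show ?thesis using bnd[OF True that(1) xout \<open>E x y\<close>] w xout by blast
        next
          case False
          then show ?thesis using w xout by blast
        qed
      qed
    next
      case False then show ?thesis using rho0 by simp
    qed
    then show ?thesis using False that by (auto simp: c1_def restrRho_def)
  qed
  have Deq: "Dform W1 c1 w w = Dform W0 c0 w w"
  proof -
    let ?F = "\<lambda>x y. c0 x y * (w y - w x) * (w y - w x)"
    have "Dform W1 c1 w w = (\<Sum>x\<in>W1. \<Sum>y\<in>W1. if x \<in> W0 \<and> y \<in> W0 then ?F x y else 0)"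
      unfolding Dform_def by (intro sum.cong refl) (simp add: tm)
    also have "\<dots> = (\<Sum>x\<in>W1. if x \<in> W0 then (\<Sum>y\<in>W0. ?F x y) else 0)"
    proof (intro sum.cong refl)
      fix x assume "x \<in> W1"
      show "(\<Sum>y\<in>W1. if x \<in> W0 \<and> y \<in> W0 then ?F x y else 0) = (if x \<in> W0 then (\<Sum>y\<in>W0. ?F x y) else 0)"
      proof (cases "x \<in> W0")
        case True
        then have "(\<Sum>y\<in>W1. if x \<in> W0 \<and> y \<in> W0 then ?F x y else 0) = (\<Sum>y\<in>W1. if y \<in> W0 then ?F x y else 0)"
          by simp
        also have "\<dots> = (\<Sum>y\<in>W1 \<inter> W0. ?F x y)" using t1(1) by (simp add: sum.inter_restrict)
        also have "W1 \<inter> W0 = W0" using W01 by blast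
        finally show ?thesis using True by simp
      next
        case False then show ?thesis by simp
      qed
    qed
    also have "\<dots> = (\<Sum>x\<in>W1 \<inter> W0. \<Sum>y\<in>W0. ?F x y)" using t1(1) by (simp add: sum.inter_restrict)
    also have "W1 \<inter> W0 = W0" using W01 by blast
    finally show ?thesis unfolding Dform_def .
  qed
  have "0 \<le> Dform W1 c1 (\<lambda>x. w x - v x) (\<lambda>x. w x - v x)"
    by (rule Dform_nonneg[OF t1(5)])
  also have "\<dots> = Dform W1 c1 w w - 2 * Dform W1 c1 w v + Dform W1 c1 v v"
    by (rule Dform_expand)
  also have "Dform W1 c1 w v = Dform W1 c1 v w" by (rule Dform_sym)
  finally have "0 \<le> Dform W0 c0 w w - 2 * Dform W1 c1 v w + Dform W1 c1 v v" using Deq by simp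
  then have "0 \<le> -2 * Lap W0 c0 w a0 + 2 * Lap W1 c1 v a0"
    using D1vv D1vw D0ww v w by simp
  then show ?thesis unfolding P0 P1 by simp
qed

end
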